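(* Let $(\mathbf{X},Y,\hat Y)$ be random variables on $\mathcal{X}\times\mathcal{Y}\times\mathcal{Y}$ with $P(\hat Y=i\mid Y=j)=p_{i,j}$ for all $i,j\in\{1,\dots,K\}$ (so $\sum_{i=1}^K p_{i,j}=1$ for each $j$), and assume $\hat Y$ is conditionally independent of $\mathbf{X}$ given $Y$ (i.e. $P(\mathbf{X}\mid Y)=P(\mathbf{X}\mid Y,\hat Y)$), so that $P(\hat Y=i\mid\mathbf{X})=\sum_{j=1}^K p_{i,j}P(Y=j\mid\mathbf{X})$. Let $Q$ be any probability distribution on a hypothesis class $\mathcal{H}$ and let $\hat M$ be a random variable such that, conditionally on $\mathbf{X}=\mathbf{x}$, $\hat M$ is discrete and equals $M_Q(\mathbf{x},i)$ with probability $P(\hat Y=i\mid\mathbf{X}=\mathbf{x})$, $i=1,\dots,K$. Let $\mu^{\hat M}_1=\mathbb{E}[\hat M]$, $\mu^{\hat M}_2=\mathbb{E}[\hat M^2]$, and $\beta=\max_{i\in\{1,\dots,K\}}\sum_{j=1}^K p_{i,j}$. If $\mu^{\hat M}_1>0$, then $$R(B_{Q_{\mathrm{opt}}})\le 1-\frac{1}{\beta}\cdot\frac{(\mu^{\hat M}_1)^2}{\mu^{\hat M}_2}.$$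
   Context: $\mathcal{X}\subset\mathbb{R}^d$, $\mathcal{Y}=\{1,\dots,K\}$, $K\ge2$; $\mathcal{H}$ is a class of classifiers $h:\mathcal{X}\to\mathcal{Y}$. For a distribution $Q$ on $\mathcal{H}$: votes $v_Q(\mathbf{x},c)=\mathbb{E}_{h\sim Q}\mathbb{1}[h(\mathbf{x})=c]$, margin $M_Q(\mathbf{x},y)=v_Q(\mathbf{x},y)-\max_{c\ne y}v_Q(\mathbf{x},c)$. $B_{Q_{\mathrm{opt}}}$ denotes the optimal (maximum a posteriori) classifier $B_{Q_{\mathrm{opt}}}(\mathbf{x})=\arg\max_{c\in\mathcal{Y}}P(Y=c\mid\mathbf{X}=\mathbf{x})$, whose risk with respect to the true label is $R(B_{Q_{\mathrm{opt}}})=\mathbb{E}_{\mathbf{X}}\big[1-\max_{j}P(Y=j\mid\mathbf{X})\big]$. $\hat Y$ is an imperfect (noisy) version of the label $Y$. *)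

theory Defs
  imports "HOL-Probability.Probability"
begin

text \<open>Labels are the natural numbers 1..K. A classifier is a function 'a => nat.
  A distribution Q on classifiers is a probability measure on the function space.\<close>

definition votes :: "('a \<Rightarrow> nat) measure \<Rightarrow> 'a \<Rightarrow> nat \<Rightarrow> real" where
  "votes Q x c = measure Q {h \<in> space Q. h x = c}"

definition margin :: "('a \<Rightarrow> nat) measure \<Rightarrow> nat \<Rightarrow> 'a \<Rightarrow> nat \<Rightarrow> real" where
  "margin Q K x y = votes Q x y - Max ((\<lambda>c. votes Q x c) ` ({1..K} - {y}))"

text \<open>P(Yhat = i | X = x) = sum_j p i j * P(Y = j | X = x)\<close>
definition noisy_post :: "(nat \<Rightarrow> nat \<Rightarrow> real) \<Rightarrow> (nat \<Rightarrow> 'a \<Rightarrow> real) \<Rightarrow> nat \<Rightarrow> nat \<Rightarrow> 'a \<Rightarrow> real" where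
  "noisy_post p \<eta> K i x = (\<Sum>j=1..K. p i j * \<eta> j x)"

text \<open>Risk of the optimal (MAP) classifier: E_X [1 - max_j P(Y=j|X)].\<close>
definition bayes_risk :: "'w measure \<Rightarrow> ('w \<Rightarrow> 'a) \<Rightarrow> (nat \<Rightarrow> 'a \<Rightarrow> real) \<Rightarrow> nat \<Rightarrow> real" where
  "bayes_risk M X \<eta> K = (\<integral>\<omega>. 1 - Max ((\<lambda>j. \<eta> j (X \<omega>)) ` {1..K}) \<partial>M)"

end

theory Submission
  imports Defs
begin

lemma votes_bounds:
  assumes "prob_space Q"
  shows "0 \<le> votes Q x c" "votes Q x c \<le> 1"
  unfolding votes_def using prob_space.prob_le_1[OF assms] by auto

lemma margin_bounds:
  assumes "prob_space Q" "K \<ge> 2" "i \<in> {1..K}"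
  shows "-1 \<le> margin Q K x i \<and> margin Q K x i \<le> 1"
proof -
  let ?S = "(\<lambda>c. votes Q x c) ` ({1..K} - {i})"
  have ne: "{1..K} - {i} \<noteq> {}"
  proof -
    have "(if i = 1 then 2 else 1) \<in> {1..K} - {i}" using assms by auto
    thus ?thesis by blast
  qed
  have "Max ?S \<in> ?S" by (rule Max_in) (use ne in auto)
  then obtain c where "Max ?S = votes Q x c" by auto
  thus ?thesis unfolding margin_def using votes_bounds[OF assms(1), of x] by smt
qed

lemma margin_unique:
  assumes "i \<in> {1..K}" "i' \<in> {1..K}" "i \<noteq> i'" "margin Q K x i > 0"
  shows "margin Q K x i' \<le> 0"
proof -
  have "votes Q x i' \<le> Max ((\<lambda>c. votes Q x c) ` ({1..K} - {i}))"
    by (rule Max_ge) (use assms in auto)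
  moreover have "votes Q x i \<le> Max ((\<lambda>c. votes Q x c) ` ({1..K} - {i'}))"
    by (rule Max_ge) (use assms in auto)
  ultimately show ?thesis using assms(4) unfolding margin_def by linarith
qed

lemma quad_lemma:
  fixes A e s :: real
  assumes "\<And>c. 0 \<le> A - 2*c*e + c^2 * s" "e > 0" "s \<ge> 0"
  shows "e^2 \<le> A * s"
proof (cases "s = 0")
  case True
  have "0 \<le> A - 2*((A+1)/(2*e))*e" using assms(1)[of "(A+1)/(2*e)"] True by simp
  also have "\<dots> = -1" using assms(2) by (simp add: field_simps)
  finally show ?thesis by simp
next
  case False
  hence sp: "s > 0" using assms by simp
  have "0 \<le> A - 2*(e/s)*e + (e/s)^2 * s" by (rule assms(1))
  also have "\<dots> = A - e^2/s" using sp by (simp add: field_simps power2_eq_square)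
  finally show ?thesis using sp by (simp add: field_simps)
qed

theorem proposition1:
  fixes M :: "'w measure"
    and K :: nat
    and Xset :: "'a::euclidean_space set"
    and X :: "'w \<Rightarrow> 'a" and Y Yhat :: "'w \<Rightarrow> nat"
    and \<eta> :: "nat \<Rightarrow> 'a \<Rightarrow> real"
    and p :: "nat \<Rightarrow> nat \<Rightarrow> real"
    and H :: "('a \<Rightarrow> nat) set"
    and Q :: "('a \<Rightarrow> nat) measure"
    and Mhat :: "'w \<Rightarrow> real"
  assumes K2: "K \<ge> 2"
    and M_prob: "prob_space M"
    and X_meas: "X \<in> borel_measurable M"
    and X_range: "\<forall>\<omega>\<in>space M. X \<omega> \<in> Xset"
    and Y_meas: "Y \<in> measurable M (count_space UNIV)"
    and Yhat_meas: "Yhat \<in> measurable M (count_space UNIV)"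
    and Y_range: "\<forall>\<omega>\<in>space M. Y \<omega> \<in> {1..K}"
    and Yhat_range: "\<forall>\<omega>\<in>space M. Yhat \<omega> \<in> {1..K}"
    \<comment> \<open>eta j x is (a regular version of) P(Y = j | X = x)\<close>
    and eta_meas: "\<forall>j\<in>{1..K}. \<eta> j \<in> borel_measurable borel"
    and eta_nonneg: "\<forall>j\<in>{1..K}. \<forall>x. \<eta> j x \<ge> 0"
    and eta_sum: "\<forall>x. (\<Sum>j=1..K. \<eta> j x) = 1"
    and eta_cond: "\<forall>j\<in>{1..K}. \<forall>A\<in>sets borel.
        measure M {\<omega> \<in> space M. X \<omega> \<in> A \<and> Y \<omega> = j}
          = (\<integral>\<omega>. indicator A (X \<omega>) * \<eta> j (X \<omega>) \<partial>M)"
    \<comment> \<open>P(Yhat = i | Y = j) = p i j, and Yhat conditionally independent of X given Y\<close>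
    and p_nonneg: "\<forall>i\<in>{1..K}. \<forall>j\<in>{1..K}. p i j \<ge> 0"
    and p_sum: "\<forall>j\<in>{1..K}. (\<Sum>i=1..K. p i j) = 1"
    and noise_ci: "\<forall>i\<in>{1..K}. \<forall>j\<in>{1..K}. \<forall>A\<in>sets borel.
        measure M {\<omega> \<in> space M. X \<omega> \<in> A \<and> Y \<omega> = j \<and> Yhat \<omega> = i}
          = p i j * measure M {\<omega> \<in> space M. X \<omega> \<in> A \<and> Y \<omega> = j}"
    \<comment> \<open>Q is a probability distribution on the hypothesis class H\<close>
    and H_class: "\<forall>h\<in>H. \<forall>x\<in>Xset. h x \<in> {1..K}"
    and Q_prob: "prob_space Q"
    and Q_space: "space Q \<subseteq> H"
    and Q_sets: "\<forall>x c. {h \<in> space Q. h x = c} \<in> sets Q"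
    and margin_meas: "\<forall>i\<in>{1..K}. (\<lambda>x. margin Q K x i) \<in> borel_measurable borel"
    \<comment> \<open>Mhat given X = x equals margin Q K x i with probability P(Yhat = i | X = x)\<close>
    and Mhat_meas: "Mhat \<in> borel_measurable M"
    and Mhat_law: "\<forall>A\<in>sets borel. \<forall>B\<in>sets borel.
        measure M {\<omega> \<in> space M. X \<omega> \<in> A \<and> Mhat \<omega> \<in> B}
          = (\<integral>\<omega>. indicator A (X \<omega>) *
               (\<Sum>i=1..K. noisy_post p \<eta> K i (X \<omega>) * indicator B (margin Q K (X \<omega>) i)) \<partial>M)"
    and mu1_pos: "(\<integral>\<omega>. Mhat \<omega> \<partial>M) > 0"
  shows "bayes_risk M X \<eta> K
           \<le> 1 - (1 / Max ((\<lambda>i. \<Sum>j=1..K. p i j) ` {1..K}))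
                 * ((\<integral>\<omega>. Mhat \<omega> \<partial>M)\<^sup>2 / (\<integral>\<omega>. (Mhat \<omega>)\<^sup>2 \<partial>M))"
proof -
  interpret P: prob_space M by (rule M_prob)
  define nh where "nh i x = noisy_post p \<eta> K i x" for i x
  define m where "m x = Max ((\<lambda>j. \<eta> j x) ` {1..K})" for x
  define \<beta> where "\<beta> = Max ((\<lambda>i. \<Sum>j=1..K. p i j) ` {1..K})"
  define g where "g x = (\<Sum>i=1..K. nh i x * indicator {0<..} (margin Q K x i))" for x
  have K1: "1 \<in> {1..K}" using K2 by auto
  have eta_le1: "\<eta> j x \<le> 1" if "j \<in> {1..K}" for j x
  proof -
    have "\<eta> j x \<le> (\<Sum>j=1..K. \<eta> j x)"
      by (rule member_le_sum) (use that eta_nonneg in auto)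
    thus ?thesis using eta_sum by simp
  qed
  have m_ge: "\<eta> j x \<le> m x" if "j \<in> {1..K}" for j x
    unfolding m_def by (rule Max_ge) (use that in auto)
  have m_in: "m x \<in> (\<lambda>j. \<eta> j x) ` {1..K}" for x
    unfolding m_def by (rule Max_in) (use K1 in auto)
  have m_bd: "0 \<le> m x \<and> m x \<le> 1" for x
    using m_in[of x] eta_nonneg eta_le1 by fastforce
  have nh_nonneg: "0 \<le> nh i x" if "i \<in> {1..K}" for i x
    unfolding nh_def noisy_post_def using that p_nonneg eta_nonneg
    by (intro sum_nonneg) auto
  have row_le: "(\<Sum>j=1..K. p i j) \<le> \<beta>" if "i \<in> {1..K}" for i
    unfolding \<beta>_def by (rule Max_ge) (use that in auto)
  have beta_nonneg: "0 \<le> \<beta>"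
  proof -
    have "0 \<le> (\<Sum>j=1..K. p 1 j)" using p_nonneg K1 by (intro sum_nonneg) auto
    thus ?thesis using row_le[OF K1] by linarith
  qed
  have nh_le: "nh i x \<le> \<beta> * m x" if "i \<in> {1..K}" for i x
  proof -
    have "nh i x \<le> (\<Sum>j=1..K. p i j * m x)"
      unfolding nh_def noisy_post_def
      using that p_nonneg m_ge by (intro sum_mono mult_left_mono) auto
    also have "\<dots> = (\<Sum>j=1..K. p i j) * m x" by (simp add: sum_distrib_right)
    also have "\<dots> \<le> \<beta> * m x" using row_le[OF that] m_bd[of x] by (simp add: mult_right_mono)
    finally show ?thesis .
  qed
  have nh_sum: "(\<Sum>i=1..K. nh i x) = 1" for x
  proof -
    have "(\<Sum>i=1..K. nh i x) = (\<Sum>j=1..K. \<Sum>i=1..K. p i j * \<eta> j x)"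
      unfolding nh_def noisy_post_def by (rule sum.swap)
    also have "\<dots> = (\<Sum>j=1..K. (\<Sum>i=1..K. p i j) * \<eta> j x)" by (simp add: sum_distrib_right)
    also have "\<dots> = (\<Sum>j=1..K. \<eta> j x)" using p_sum by simp
    finally show ?thesis using eta_sum by simp
  qed
  have g_le: "g x \<le> \<beta> * m x" for x
  proof (cases "\<exists>i0\<in>{1..K}. margin Q K x i0 > 0")
    case True
    then obtain i0 where i0: "i0 \<in> {1..K}" "margin Q K x i0 > 0" by auto
    have z: "nh i x * indicator {0<..} (margin Q K x i) = 0" if "i \<in> {1..K} - {i0}" for i
      using margin_unique[OF i0(1), of i Q x] that i0 by (auto simp: indicator_def)
    have g1: "g x = nh i0 x * indicator {0<..} (margin Q K x i0)
        + (\<Sum>i\<in>{1..K} - {i0}. nh i x * indicator {0<..} (margin Q K x i))"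
      unfolding g_def by (rule sum.remove) (use i0 in auto)
    have g2: "(\<Sum>i\<in>{1..K} - {i0}. nh i x * indicator {0<..} (margin Q K x i)) = 0"
      using z by (intro sum.neutral) blast
    have "g x = nh i0 x" using g1 g2 i0 by simp
    thus ?thesis using nh_le[OF i0(1)] by simp
  next
    case False
    hence "g x = 0" unfolding g_def by (intro sum.neutral) (auto simp: indicator_def)
    thus ?thesis using beta_nonneg m_bd[of x] by simp
  qed
  have g_bd: "0 \<le> g x \<and> g x \<le> 1" for x
  proof -
    have "g x \<le> (\<Sum>i=1..K. nh i x)" unfolding g_def
      using nh_nonneg by (intro sum_mono) (auto simp: indicator_def)
    moreover have "0 \<le> g x" unfolding g_def using nh_nonneg by (intro sum_nonneg) auto
    ultimately show ?thesis using nh_sum[of x] by simp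
  qed
  have eta_m: "\<eta> j \<in> borel_measurable borel" if "j \<in> {1..K}" for j
    using eta_meas that by auto
  have nh_meas: "nh i \<in> borel_measurable borel" for i
    unfolding nh_def[abs_def] noisy_post_def
    by (intro borel_measurable_sum borel_measurable_times borel_measurable_const eta_m) auto
  have g_meas: "g \<in> borel_measurable borel"
    unfolding g_def[abs_def]
  proof (intro borel_measurable_sum borel_measurable_times nh_meas)
    fix i assume "i \<in> {1..K}"
    hence mm: "(\<lambda>x. margin Q K x i) \<in> borel_measurable borel" using margin_meas by auto
    show "(\<lambda>x. indicator {0<..} (margin Q K x i) :: real) \<in> borel_measurable borel"
      using mm by measurable
  qed
  have m_meas: "m \<in> borel_measurable borel"
    unfolding m_def[abs_def] by (intro borel_measurable_Max eta_m) auto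
  have gX_meas: "(\<lambda>\<omega>. g (X \<omega>)) \<in> borel_measurable M"
    using measurable_compose[OF X_meas g_meas] .
  have mX_meas: "(\<lambda>\<omega>. m (X \<omega>)) \<in> borel_measurable M"
    using measurable_compose[OF X_meas m_meas] .
  have int_gX: "integrable M (\<lambda>\<omega>. g (X \<omega>))"
    by (rule P.integrable_const_bound[where B=1]) (use g_bd gX_meas in auto)
  have int_mX: "integrable M (\<lambda>\<omega>. m (X \<omega>))"
    by (rule P.integrable_const_bound[where B=1]) (use m_bd mX_meas in auto)
  have law1: "measure M {\<omega> \<in> space M. Mhat \<omega> \<in> {-1..1}} = 1"
  proof -
    have "measure M {\<omega> \<in> space M. X \<omega> \<in> UNIV \<and> Mhat \<omega> \<in> {-1..1}}
        = (\<integral>\<omega>. indicator UNIV (X \<omega>) *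
               (\<Sum>i=1..K. noisy_post p \<eta> K i (X \<omega>) * indicator {-1..1} (margin Q K (X \<omega>) i)) \<partial>M)"
      by (rule Mhat_law[rule_format]) auto
    also have "\<dots> = (\<integral>\<omega>. 1 \<partial>M)"
    proof (rule Bochner_Integration.integral_cong[OF refl])
      fix \<omega>
      have "(\<Sum>i=1..K. noisy_post p \<eta> K i (X \<omega>) * indicator {-1..1} (margin Q K (X \<omega>) i))
          = (\<Sum>i=1..K. nh i (X \<omega>))"
        using margin_bounds[OF Q_prob K2] by (intro sum.cong) (auto simp: nh_def indicator_def)
      thus "indicator UNIV (X \<omega>) *
               (\<Sum>i=1..K. noisy_post p \<eta> K i (X \<omega>) * indicator {-1..1} (margin Q K (X \<omega>) i)) = (1::real)"
        using nh_sum by simp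
    qed
    finally show ?thesis by (simp add: P.prob_space)
  qed
  have AEb: "AE \<omega> in M. norm (Mhat \<omega>) \<le> 1"
  proof -
    have "AE \<omega> in M. \<omega> \<in> {\<omega> \<in> space M. Mhat \<omega> \<in> {-1..1}}"
      by (rule P.AE_prob_1) (use law1 in simp)
    thus ?thesis by eventually_elim auto
  qed
  define f where "f \<omega> = max (Mhat \<omega>) 0" for \<omega>
  define ind where "ind \<omega> = (indicator {0<..} (Mhat \<omega>) :: real)" for \<omega>
  have f_meas: "f \<in> borel_measurable M" unfolding f_def[abs_def] using Mhat_meas by measurable
  have ind_meas: "ind \<in> borel_measurable M" unfolding ind_def[abs_def] using Mhat_meas by measurable
  have int_M: "integrable M Mhat"
    by (rule P.integrable_const_bound[where B=1]) (use AEb Mhat_meas in auto)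
  have int_M2: "integrable M (\<lambda>\<omega>. (Mhat \<omega>)^2)"
  proof (rule P.integrable_const_bound[where B=1])
    show "AE \<omega> in M. norm ((Mhat \<omega>)^2) \<le> 1" using AEb
      by eventually_elim (simp add: abs_square_le_1)
  qed (use Mhat_meas in measurable)
  have int_f: "integrable M f"
  proof (rule P.integrable_const_bound[where B=1])
    show "AE \<omega> in M. norm (f \<omega>) \<le> 1" using AEb
      by eventually_elim (auto simp: f_def)
  qed (rule f_meas)
  have int_f2: "integrable M (\<lambda>\<omega>. (f \<omega>)^2)"
  proof (rule P.integrable_const_bound[where B=1])
    show "AE \<omega> in M. norm ((f \<omega>)^2) \<le> 1" using AEb
      by eventually_elim (auto simp: f_def abs_square_le_1)
  qed (use f_meas in measurable)
  have int_ind: "integrable M ind"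
    by (rule P.integrable_const_bound[where B=1]) (use ind_meas in \<open>auto simp: ind_def\<close>)
  define \<mu>1 where "\<mu>1 = (\<integral>\<omega>. Mhat \<omega> \<partial>M)"
  define \<mu>2 where "\<mu>2 = (\<integral>\<omega>. (Mhat \<omega>)^2 \<partial>M)"
  define e where "e = (\<integral>\<omega>. f \<omega> \<partial>M)"
  define A where "A = (\<integral>\<omega>. (f \<omega>)^2 \<partial>M)"
  define s where "s = (\<integral>\<omega>. ind \<omega> \<partial>M)"
  have mu1_le: "\<mu>1 \<le> e" unfolding \<mu>1_def e_def
    by (rule integral_mono[OF int_M int_f]) (auto simp: f_def)
  have A_le: "A \<le> \<mu>2" unfolding A_def \<mu>2_def
    by (rule integral_mono[OF int_f2 int_M2]) (auto simp: f_def max_def)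
  have s_nonneg: "0 \<le> s" unfolding s_def ind_def by (rule Bochner_Integration.integral_nonneg) auto
  have quad: "0 \<le> A - 2*c*e + c^2 * s" for c
  proof -
    have "0 \<le> (\<integral>\<omega>. (f \<omega> - c * ind \<omega>)^2 \<partial>M)" by (rule Bochner_Integration.integral_nonneg) auto
    also have "(\<integral>\<omega>. (f \<omega> - c * ind \<omega>)^2 \<partial>M)
        = (\<integral>\<omega>. ((f \<omega>)^2 - (2*c) * f \<omega>) + c^2 * ind \<omega> \<partial>M)"
      by (rule Bochner_Integration.integral_cong[OF refl])
        (auto simp: f_def ind_def indicator_def power2_eq_square algebra_simps)
    also have "\<dots> = A - 2*c*e + c^2 * s"
      unfolding A_def e_def s_def using int_f int_f2 int_ind by simp
    finally show ?thesis .
  qed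
  have e_pos: "e > 0" using mu1_le mu1_pos unfolding \<mu>1_def by simp
  have es: "e^2 \<le> A * s" by (rule quad_lemma[OF quad e_pos s_nonneg])
  have s_eq: "s = measure M {\<omega> \<in> space M. X \<omega> \<in> UNIV \<and> Mhat \<omega> \<in> {0<..}}"
  proof -
    have "s = (\<integral>\<omega>. indicator {\<omega> \<in> space M. X \<omega> \<in> UNIV \<and> Mhat \<omega> \<in> {0<..}} \<omega> \<partial>M)"
      unfolding s_def ind_def
      by (rule Bochner_Integration.integral_cong[OF refl]) (auto simp: indicator_def)
    also have "\<dots> = measure M {\<omega> \<in> space M. X \<omega> \<in> UNIV \<and> Mhat \<omega> \<in> {0<..}}"
      by (simp add: Int_absorb2)
    finally show ?thesis .
  qed
  have s_g: "s = (\<integral>\<omega>. g (X \<omega>) \<partial>M)"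
    unfolding s_eq g_def nh_def
    using Mhat_law[rule_format, of UNIV "{0<..}"] by simp
  have s_le: "s \<le> \<beta> * (\<integral>\<omega>. m (X \<omega>) \<partial>M)"
  proof -
    have "s \<le> (\<integral>\<omega>. \<beta> * m (X \<omega>) \<partial>M)" unfolding s_g
      by (rule integral_mono[OF int_gX]) (use int_mX g_le in auto)
    thus ?thesis by simp
  qed
  define Em where "Em = (\<integral>\<omega>. m (X \<omega>) \<partial>M)"
  have Em_nonneg: "0 \<le> Em" unfolding Em_def using m_bd by (intro Bochner_Integration.integral_nonneg) auto
  have mu2_nonneg: "0 \<le> \<mu>2" unfolding \<mu>2_def by (intro Bochner_Integration.integral_nonneg) auto
  have key: "\<mu>1^2 \<le> \<beta> * \<mu>2 * Em"
  proof -
    have "\<mu>1^2 \<le> e^2" using mu1_le mu1_pos unfolding \<mu>1_def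
      by (intro power_mono) auto
    also have "\<dots> \<le> A * s" by (rule es)
    also have "\<dots> \<le> \<mu>2 * s" using A_le s_nonneg by (rule mult_right_mono)
    also have "\<dots> \<le> \<mu>2 * (\<beta> * Em)" using s_le mu2_nonneg unfolding Em_def
      by (rule mult_left_mono)
    finally show ?thesis by (simp add: algebra_simps)
  qed
  have mu1sq: "0 < \<mu>1^2" using mu1_pos unfolding \<mu>1_def by simp
  have bpos: "0 < \<beta>" and mpos: "0 < \<mu>2"
    using key mu1sq beta_nonneg mu2_nonneg Em_nonneg
    by (smt (verit) mult_eq_0_iff)+
  have br: "bayes_risk M X \<eta> K = 1 - Em"
    unfolding bayes_risk_def Em_def m_def[symmetric]
    using int_mX by (simp add: Bochner_Integration.integral_diff P.prob_space)
  have "(1 / \<beta>) * (\<mu>1^2 / \<mu>2) \<le> Em"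
    using key bpos mpos by (simp add: field_simps mult.commute mult.left_commute)
  thus ?thesis unfolding br \<beta>_def[symmetric] \<mu>1_def[symmetric] \<mu>2_def[symmetric] by simp
qed

end
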